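(* Let $\mathbb{I}>0$, $\xi>0$, $0<c\le1$, and for $\ell>0$ let $g_{c,\xi}(\ell)=4c\ell^2\int_0^\infty u^2\,\Phi\big(-\frac{u\ell\xi\sqrt{c\mathbb{I}}}{2}\big)\phi(u)\,du$. Then $g_{c,\xi}$ is maximized at $\ell_{opt}=\frac{2.426}{\xi\sqrt{c\,\mathbb{I}}}$ (constant to three decimals), and $$\alpha_{opt}=4\int_0^\infty\Phi\Big(-\frac{u\ell_{opt}\xi\sqrt{c\,\mathbb{I}}}{2}\Big)\phi(u)\,du=0.439$$ up to three decimal places.
   Context: $\Phi,\phi$ are the standard normal cdf and density; $g_{c,\xi}$ is the diffusion speed of the limiting diffusion of additive TMCMC-within-Gibbs for independent non-identically scaled product targets and $\alpha_{opt}$ the corresponding optimal acceptance rate. *)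

theory Defs
  imports "HOL-Probability.Probability"
begin

definition std_phi :: "real \<Rightarrow> real" where
  "std_phi x = std_normal_density x"

definition std_Phi :: "real \<Rightarrow> real" where
  "std_Phi x = (LBINT t:{..x}. std_phi t)"

definition g_speed :: "real \<Rightarrow> real \<Rightarrow> real \<Rightarrow> real \<Rightarrow> real" where
  "g_speed I c \<xi> l =
     4 * c * l\<^sup>2 * (LBINT u:{0..}. u\<^sup>2 * std_Phi (- (u * l * \<xi> * sqrt (c * I)) / 2) * std_phi u)"

definition acc_rate :: "real \<Rightarrow> real \<Rightarrow> real \<Rightarrow> real \<Rightarrow> real" where
  "acc_rate I c \<xi> l =
     4 * (LBINT u:{0..}. std_Phi (- (u * l * \<xi> * sqrt (c * I)) / 2) * std_phi u)"

definition round3 :: "real \<Rightarrow> real" where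
  "round3 x = real_of_int (round (1000 * x)) / 1000"

end

theory Submission
  imports Defs "HOL-Real_Asymp.Real_Asymp"
begin

lemma arctan_upper:
  fixes y :: real assumes "0 \<le> y"
  shows "arctan y \<le> y - y^3/3 + y^5/5"
proof -
  let ?f = "\<lambda>y. y - y^3/3 + y^5/5 - arctan y"
  have d: "(?f has_real_derivative (1 - y^2 + y^4 - 1/(1+y^2))) (at y)" for y :: real
    by (auto intro!: derivative_eq_intros simp: field_simps power2_eq_square)
  have nn: "0 \<le> 1 - y^2 + y^4 - 1/(1+y^2)" for y :: real
  proof -
    have p0: "0 < 1 + y^2" by (simp add: add_pos_nonneg)
    hence p: "1 + y^2 \<noteq> 0" by simp
    have "1 - y^2 + y^4 - 1/(1+y^2) = y^6/(1+y^2)"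
      using p by (simp add: divide_simps) algebra
    thus ?thesis by simp
  qed
  have "?f 0 \<le> ?f y"
    by (rule DERIV_nonneg_imp_nondecreasing[of 0 y ?f]) (use assms d nn in blast)+
  thus ?thesis by simp
qed

lemma arctan_lower:
  fixes y :: real assumes "0 \<le> y"
  shows "y - y^3/3 + y^5/5 - y^7/7 \<le> arctan y"
proof -
  let ?f = "\<lambda>y. arctan y - (y - y^3/3 + y^5/5 - y^7/7)"
  have d: "(?f has_real_derivative (1/(1+y^2) - (1 - y^2 + y^4 - y^6))) (at y)" for y :: real
    by (auto intro!: derivative_eq_intros simp: field_simps power2_eq_square)
  have nn: "0 \<le> 1/(1+y^2) - (1 - y^2 + y^4 - y^6)" for y :: real
  proof -
    have p0: "0 < 1 + y^2" by (simp add: add_pos_nonneg)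
    hence p: "1 + y^2 \<noteq> 0" by simp
    have "1/(1+y^2) - (1 - y^2 + y^4 - y^6) = y^8/(1+y^2)"
      using p by (simp add: divide_simps) algebra
    thus ?thesis by simp
  qed
  have "?f 0 \<le> ?f y"
    by (rule DERIV_nonneg_imp_nondecreasing[of 0 y ?f]) (use assms d nn in blast)+
  thus ?thesis by simp
qed

lemma arctan_shift:
  fixes a :: real assumes "0 < a"
  shows "arctan a = pi/4 + arctan ((a-1)/(a+1))"
proof -
  have "arctan 1 + arctan ((a-1)/(a+1)) = arctan ((1 + (a-1)/(a+1)) / (1 - 1 * ((a-1)/(a+1))))"
    using assms by (intro arctan_add) (auto simp: abs_less_iff field_simps)
  also have "(1 + (a-1)/(a+1)) / (1 - 1 * ((a-1)/(a+1))) = a"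
    using assms by (simp add: field_simps)
  finally show ?thesis by (simp add: arctan_one)
qed


lemma num1: "pi/4 - ((133/1383::real) - (133/1383)^3/3 + (133/1383)^5/5) - ((1.2128::real)/(1+1.2128^2) + 1.2128/(1+1.2128^2)^2) > 0"
proof -
  define K where "K = ((133/1383::real) - (133/1383)^3/3 + (133/1383)^5/5) + ((1.2128::real)/(1+1.2128^2) + 1.2128/(1+1.2128^2)^2)"
  have "K < (3.141592653588::real)/4"
    unfolding K_def by (simp add: power_divide power2_eq_square)
  moreover have "(3141592653588/1000000000000::real) \<le> pi" using pi_approx(1) by simp
  ultimately have "K < pi/4" by simp
  thus ?thesis unfolding K_def by linarith
qed

lemma num2: "pi/4 - ((5331/55331::real) - (5331/55331)^3/3 + (5331/55331)^5/5 - (5331/55331)^7/7) - ((1.21324::real)/(1+1.21324^2) + 1.21324/(1+1.21324^2)^2) < 0"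
proof -
  define K where "K = ((5331/55331::real) - (5331/55331)^3/3 + (5331/55331)^5/5 - (5331/55331)^7/7) + ((1.21324::real)/(1+1.21324^2) + 1.21324/(1+1.21324^2)^2)"
  have "K > (3.1415926535899::real)/4"
    unfolding K_def by (simp add: power_divide power2_eq_square)
  moreover have "pi \<le> (31415926535899/10000000000000::real)" using pi_approx(2) by simp
  ultimately have "K > pi/4" by simp
  thus ?thesis unfolding K_def by linarith
qed


definition EE :: "real \<Rightarrow> real" where
  "EE a = pi/2 - arctan a - a/(1+a^2) - a/(1+a^2)^2"

definition hh :: "real \<Rightarrow> real" where
  "hh a = 1/4 - (arctan a + a/(1+a^2))/(2*pi)"

definition MM :: "real \<Rightarrow> real" where
  "MM a = a^2 * hh a"

lemma onepsq2: "0 < 1 + (a::real)^2"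
  by (simp add: add_pos_nonneg)
lemma onepsq: "1 + (a::real)^2 \<noteq> 0"
  using onepsq2[of a] by linarith

lemma EE_deriv: "(EE has_real_derivative (-(3 - a^2)/(1+a^2)^3)) (at a)"
proof -
  have p: "1 + a^2 \<noteq> 0" by (rule onepsq)
  show ?thesis
    unfolding EE_def[abs_def]
    apply (rule derivative_eq_intros refl | simp add: p)+
    using p apply (simp add: divide_simps)
    apply algebra
    done
qed

lemma MM_deriv: "(MM has_real_derivative (a * EE a / pi)) (at a)"
proof -
  have p: "1 + a^2 \<noteq> 0" by (rule onepsq)
  show ?thesis
    unfolding MM_def[abs_def] hh_def EE_def
    apply (rule derivative_eq_intros refl | simp add: p)+
    using p apply (simp add: divide_simps)
    apply algebra
    done
qed


lemma dec_helper:
  fixes f f' :: "real \<Rightarrow> real"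
  assumes "a < b" "\<And>x. (f has_real_derivative f' x) (at x)" "\<And>x. a < x \<Longrightarrow> x < b \<Longrightarrow> f' x < 0"
  shows "f b < f a"
proof -
  have "continuous_on {a..b} f"
    using assms(2) by (meson DERIV_isCont continuous_at_imp_continuous_on)
  thus ?thesis
    using DERIV_neg_imp_decreasing_open[of a b f] assms by blast
qed

lemma inc_helper:
  fixes f f' :: "real \<Rightarrow> real"
  assumes "a < b" "\<And>x. (f has_real_derivative f' x) (at x)" "\<And>x. a < x \<Longrightarrow> x < b \<Longrightarrow> f' x > 0"
  shows "f a < f b"
proof -
  have "continuous_on {a..b} f"
    using assms(2) by (meson DERIV_isCont continuous_at_imp_continuous_on)
  thus ?thesis
    using DERIV_pos_imp_increasing_open[of a b f] assms by blast
qed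

lemma EE_lo: "EE 1.2128 > 0"
proof -
  have "arctan (1.2128::real) = pi/4 + arctan (133/1383)"
    using arctan_shift[of "1.2128"] by simp
  moreover have "arctan (133/1383::real) \<le> (133/1383::real) - (133/1383)^3/3 + (133/1383)^5/5"
    by (rule arctan_upper) simp
  ultimately show ?thesis using num1 unfolding EE_def by linarith
qed

lemma EE_hi: "EE 1.21324 < 0"
proof -
  have "arctan (1.21324::real) = pi/4 + arctan (5331/55331)"
    using arctan_shift[of "1.21324"] by simp
  moreover have "(5331/55331::real) - (5331/55331)^3/3 + (5331/55331)^5/5 - (5331/55331)^7/7 \<le> arctan (5331/55331::real)"
    by (rule arctan_lower) simp
  ultimately show ?thesis using num2 unfolding EE_def by linarith
qed

lemma EE_pos: assumes "0 < a" "a \<le> 1.2128" shows "EE a > 0"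
proof (cases "a = 1.2128")
  case True thus ?thesis using EE_lo by (simp only: True)
next
  case False
  hence "a < 1.2128" using assms by simp
  have "EE 1.2128 < EE a"
  proof (rule dec_helper[OF \<open>a < 1.2128\<close> EE_deriv])
    fix x :: real assume "a < x" "x < 1.2128"
    hence "x^2 < 1.2128^2" using assms by (intro power_strict_mono) auto
    hence "x^2 < 3" by (simp add: power_divide)
    thus "- (3 - x\<^sup>2) / (1 + x\<^sup>2) ^ 3 < 0" using onepsq2[of x] by (simp add: divide_neg_pos)
  qed
  thus ?thesis using EE_lo by linarith
qed

lemma poly_ineq: assumes "(t::real) \<ge> 289/100" shows "(t^2 - t/3 + 1/5)*(1+t)^2 < t^4 + 2*t^3"
proof -
  have t0: "t \<ge> 0" using assms by linarith
  have e: "t^4 + 2*t^3 - (t^2 - t/3 + 1/5)*(1+t)^2 = t*t^2/3 - 8*t^2/15 - t/15 - 1/5"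
    by (simp add: algebra_simps power2_eq_square power3_eq_cube eval_nat_numeral)
  have f1: "t*t^2 \<ge> 289/100 * t^2" using assms by (simp add: mult_right_mono)
  have f2: "t^2 \<ge> 289/100 * t" using assms t0 by (simp add: power2_eq_square mult_right_mono)
  have "t*t^2/3 - 8*t^2/15 - t/15 - 1/5 > 0" using f1 f2 assms by linarith
  thus ?thesis using e by linarith
qed

lemma EE_big: assumes "a \<ge> 1.7" shows "EE a < 0"
proof -
  have a0: "a > 0" using assms by linarith
  define t where "t = a^2"
  have "1.7^2 \<le> a^2" using assms by (intro power_mono) auto
  hence t: "t \<ge> 289/100" unfolding t_def by (simp add: power_divide)
  have t0: "t > 0" using t by linarith
  define x where "x = 1/a"
  have x0: "x \<ge> 0" using a0 by (simp add: x_def)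
  have "arctan x = pi/2 - arctan a"
    using arctan_inverse[of a] a0 by (simp add: x_def inverse_eq_divide)
  hence E: "EE a = arctan x - a/(1+a^2) - a/(1+a^2)^2" unfolding EE_def by simp
  have L: "x - x^3/3 + x^5/5 = (t^2 - t/3 + 1/5)/(a*t^2)"
    using a0 unfolding x_def t_def by (simp add: field_simps eval_nat_numeral)
  have R: "a/(1+a^2) + a/(1+a^2)^2 = (a*(2+t))/(1+t)^2"
    using onepsq[of a] unfolding t_def by (simp add: divide_simps) algebra
  have "(t^2 - t/3 + 1/5)*(1+t)^2 < (a*(2+t))*(a*t^2)"
  proof -
    have "(a*(2+t))*(a*t^2) = t^4 + 2*t^3" unfolding t_def by (simp add: algebra_simps eval_nat_numeral)
    thus ?thesis using poly_ineq[OF t] by simp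
  qed
  hence "(t^2 - t/3 + 1/5)/(a*t^2) < (a*(2+t))/(1+t)^2"
    using a0 t0 by (simp add: divide_simps add_pos_pos)
  hence "x - x^3/3 + x^5/5 < a/(1+a^2) + a/(1+a^2)^2" using L R by simp
  moreover have "arctan x \<le> x - x^3/3 + x^5/5" by (rule arctan_upper[OF x0])
  ultimately show ?thesis using E by linarith
qed

lemma EE_neg: assumes "a \<ge> 1.21324" shows "EE a < 0"
proof (cases "a \<ge> 1.7")
  case True thus ?thesis by (rule EE_big)
next
  case False
  show ?thesis
  proof (cases "a = 1.21324")
    case True thus ?thesis using EE_hi by (simp only: True)
  next
    case F2: False
    hence lt: "1.21324 < a" using assms by simp
    have "EE a < EE 1.21324"
    proof (rule dec_helper[OF lt EE_deriv])
      fix x :: real assume "1.21324 < x" "x < a"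
      hence "x^2 < 1.7^2" using False by (intro power_strict_mono) auto
      hence "x^2 < 3" by (simp add: power_divide)
      thus "- (3 - x\<^sup>2) / (1 + x\<^sup>2) ^ 3 < 0" using onepsq2[of x] by (simp add: divide_neg_pos)
    qed
    thus ?thesis using EE_hi by linarith
  qed
qed


lemma MM_inc: assumes "0 < a" "a < b" "b \<le> 1.2128" shows "MM a < MM b"
proof (rule inc_helper[OF assms(2) MM_deriv])
  fix x :: real assume "a < x" "x < b"
  hence "0 < x" "x \<le> 1.2128" using assms by auto
  hence "EE x > 0" by (rule EE_pos)
  thus "x * EE x / pi > 0" using \<open>0 < x\<close> by simp
qed

lemma MM_dec: assumes "1.21324 \<le> a" "a < b" shows "MM b < MM a"
proof (rule dec_helper[OF assms(2) MM_deriv])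
  fix x :: real assume "a < x" "x < b"
  hence "0 < x" "x \<ge> 1.21324" using assms by auto
  hence "EE x < 0" using EE_neg by blast
  thus "x * EE x / pi < 0" using \<open>0 < x\<close> by (simp add: mult_pos_neg divide_neg_pos)
qed

lemma MM_cont: "continuous_on S MM"
  by (meson DERIV_isCont MM_deriv continuous_at_imp_continuous_on)

lemma MM_max_exists: "\<exists>a\<in>{1.2128..1.21324}. \<forall>b>0. MM b \<le> MM a"
proof -
  obtain a where a: "a \<in> {1.2128..1.21324::real}" and amax: "\<forall>y\<in>{1.2128..1.21324}. MM y \<le> MM a"
    using continuous_attains_sup[of "{1.2128..1.21324::real}" MM] MM_cont by auto
  have "\<forall>b>0. MM b \<le> MM a"
  proof (intro allI impI)
    fix b :: real assume "b > 0"
    consider "b < 1.2128" | "b \<in> {1.2128..1.21324}" | "b > 1.21324" by force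
    thus "MM b \<le> MM a"
    proof cases
      case 1
      hence "MM b < MM 1.2128" using MM_inc[of b "1.2128"] \<open>b>0\<close> by simp
      moreover have "MM 1.2128 \<le> MM a" using amax by simp
      ultimately show ?thesis by simp
    next
      case 2 thus ?thesis using amax by simp
    next
      case 3
      hence "MM b < MM 1.21324" using MM_dec[of "1.21324" b] by simp
      moreover have "MM 1.21324 \<le> MM a" using amax by simp
      ultimately show ?thesis by simp
    qed
  qed
  thus ?thesis using a by blast
qed

lemma MM_max_loc: assumes "a > 0" "\<forall>b>0. MM b \<le> MM a" shows "1.2128 \<le> a" "a \<le> 1.21324"
proof -
  show "1.2128 \<le> a"
  proof (rule ccontr)
    assume "\<not> 1.2128 \<le> a"
    hence "MM a < MM 1.2128" using MM_inc[of a "1.2128"] assms(1) by simp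
    moreover have "MM 1.2128 \<le> MM a" using assms(2) by simp
    ultimately show False by simp
  qed
  show "a \<le> 1.21324"
  proof (rule ccontr)
    assume "\<not> a \<le> 1.21324"
    hence "MM a < MM 1.21324" using MM_dec[of "1.21324" a] by simp
    moreover have "MM 1.21324 \<le> MM a" using assms(2) by simp
    ultimately show False by simp
  qed
qed

lemma num3: "(5331/55331::real) - (5331/55331)^3/3 + (5331/55331)^5/5 < 0.03075 * pi"
proof -
  define K where "K = (5331/55331::real) - (5331/55331)^3/3 + (5331/55331)^5/5"
  have "K < 0.03075 * (3141592653588/1000000000000::real)"
    unfolding K_def by (simp add: power_divide)
  moreover have "(3141592653588/1000000000000::real) \<le> pi" using pi_approx(1) by simp
  ultimately have "K < 0.03075 * pi" by simp
  thus ?thesis unfolding K_def .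
qed

lemma num4: "(133/1383::real) - (133/1383)^3/3 + (133/1383)^5/5 - (133/1383)^7/7 > 0.03025 * pi"
proof -
  define K where "K = (133/1383::real) - (133/1383)^3/3 + (133/1383)^5/5 - (133/1383)^7/7"
  have "K > 0.03025 * (31415926535899/10000000000000::real)"
    unfolding K_def by (simp add: power_divide)
  moreover have "pi \<le> (31415926535899/10000000000000::real)" using pi_approx(2) by simp
  ultimately have "K > 0.03025 * pi" by simp
  thus ?thesis unfolding K_def .
qed

lemma round_l: assumes "1.2128 \<le> a" "a \<le> 1.21324" shows "round3 (2*a) = 2.426"
proof -
  have "round (1000 * (2*a)) = 2426"
    by (rule round_unique', unfold abs_less_iff) (use assms in simp)
  thus ?thesis unfolding round3_def by simp
qed

lemma round_acc: assumes "1.2128 \<le> a" "a \<le> 1.21324" shows "round3 (1 - 2 * arctan a / pi) = 0.439"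
proof -
  define y where "y = (a-1)/(a+1)"
  have a0: "a > 0" using assms by simp
  have at: "arctan a = pi/4 + arctan y" unfolding y_def by (rule arctan_shift[OF a0])
  have y1: "y \<le> 5331/55331" unfolding y_def using assms by (simp add: divide_simps)
  have y2: "133/1383 \<le> y" unfolding y_def using assms by (simp add: divide_simps)
  have "arctan y \<le> arctan (5331/55331)" using y1 by (simp add: arctan_le_iff)
  also have "\<dots> \<le> (5331/55331::real) - (5331/55331)^3/3 + (5331/55331)^5/5" by (rule arctan_upper) simp
  finally have u: "arctan y < 0.03075 * pi" using num3 by linarith
  have "(133/1383::real) - (133/1383)^3/3 + (133/1383)^5/5 - (133/1383)^7/7 \<le> arctan (133/1383)" by (rule arctan_lower) simp
  also have "\<dots> \<le> arctan y" using y2 by (simp add: arctan_le_iff)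
  finally have l: "arctan y > 0.03025 * pi" using num4 by linarith
  have e: "1 - 2 * arctan a / pi = 1/2 - 2 * (arctan y / pi)" using at by (simp add: field_simps)
  define z where "z = arctan y / pi"
  have z1: "z < 0.03075" using u unfolding z_def by (simp add: divide_simps)
  have z2: "z > 0.03025" using l unfolding z_def by (simp add: divide_simps)
  have "round (1000 * (1/2 - 2 * z)) = 439"
    by (rule round_unique', unfold abs_less_iff) (use z1 z2 in simp)
  hence "round (1000 * (1 - 2 * arctan a / pi)) = 439"
    unfolding e z_def .
  thus ?thesis unfolding round3_def by simp
qed


lemma phi_eq: "std_phi x = exp (- (x^2)/2) / sqrt (2*pi)"
  unfolding std_phi_def std_normal_density_def by simp

lemma phi_nonneg: "0 \<le> std_phi x"
  unfolding phi_eq by simp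

lemma phi_even: "std_phi (-x) = std_phi x"
  unfolding phi_eq by simp

lemma phi_meas[measurable]: "std_phi \<in> borel_measurable borel"
  unfolding phi_eq[abs_def] by measurable

lemma phi_integrable: "integrable lborel std_phi"
  using integrable_std_normal_moment[of 0] unfolding std_phi_def by simp

lemma Phi_nn: "ennreal (std_Phi x) = (\<integral>\<^sup>+t. ennreal (indicator {..x} t * std_phi t) \<partial>lborel)"
proof -
  have i: "integrable lborel (\<lambda>t. indicator {..x} t * std_phi t)"
    using integrable_real_mult_indicator[OF _ phi_integrable, of "{..x}"] by (simp add: mult.commute)
  have "(\<integral>\<^sup>+t. ennreal (indicator {..x} t * std_phi t) \<partial>lborel) = ennreal (integral\<^sup>L lborel (\<lambda>t. indicator {..x} t * std_phi t))"
    by (rule nn_integral_eq_integral[OF i]) (simp add: phi_nonneg)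
  moreover have "std_Phi x = integral\<^sup>L lborel (\<lambda>t. indicator {..x} t * std_phi t)"
    unfolding std_Phi_def set_lebesgue_integral_def by simp
  ultimately show ?thesis by simp
qed

lemma Phi_nonneg: "0 \<le> std_Phi x"
  unfolding std_Phi_def set_lebesgue_integral_def
  by (rule integral_nonneg_AE) (simp add: phi_nonneg)

lemma Phi_mono: "mono std_Phi"
proof (rule monoI)
  fix x y :: real assume "x \<le> y"
  have "ennreal (std_Phi x) \<le> ennreal (std_Phi y)"
    unfolding Phi_nn
    by (rule nn_integral_mono) (use \<open>x \<le> y\<close> phi_nonneg in \<open>auto split: split_indicator intro!: ennreal_leI\<close>)
  thus "std_Phi x \<le> std_Phi y" using Phi_nonneg[of y] by (simp add: ennreal_le_iff)
qed

lemma Phi_meas[measurable]: "std_Phi \<in> borel_measurable borel"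
  by (rule borel_measurable_mono[OF Phi_mono])

lemma Phi_subst:
  assumes u: "u > 0"
  shows "ennreal (std_Phi (-(a*u))) = (\<integral>\<^sup>+v. ennreal (u * std_phi (u * v) * indicator {a ..} v) \<partial>lborel)"
proof -
  have "ennreal (std_Phi (-(a*u))) = (\<integral>\<^sup>+t. ennreal (indicator {..-(a*u)} t * std_phi t) \<partial>lborel)"
    by (rule Phi_nn)
  also have "\<dots> = \<bar>-u\<bar> * (\<integral>\<^sup>+v. ennreal (indicator {..-(a*u)} (0 + (-u) * v) * std_phi (0 + (-u) * v)) \<partial>lborel)"
    by (rule nn_integral_real_affine) (use u in auto)
  also have "\<dots> = (\<integral>\<^sup>+v. ennreal u * ennreal (indicator {a ..} v * std_phi (u * v)) \<partial>lborel)"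
  proof -
    have "\<And>v. indicator {..-(a*u)} (0 + (-u) * v) * std_phi (0 + (-u) * v) = indicator {a ..} v * std_phi (u * v)"
      using u phi_even by (auto split: split_indicator simp: mult.commute)
    thus ?thesis using u by (simp add: nn_integral_cmult)
  qed
  also have "\<dots> = (\<integral>\<^sup>+v. ennreal (u * std_phi (u * v) * indicator {a ..} v) \<partial>lborel)"
    by (rule nn_integral_cong) (use u in \<open>simp add: ennreal_mult' phi_nonneg mult_ac\<close>)
  finally show ?thesis .
qed

lemma phi_prod: "std_phi u * std_phi (u * v) = exp (-((1+v^2)*u^2)/2) / (2*pi)"
proof -
  have "exp (- (u^2)/2) * exp (- ((u * v)^2)/2) = exp (-((1+v^2)*u^2)/2)"
    by (simp add: exp_add[symmetric] power_mult_distrib algebra_simps add_divide_distrib)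
  moreover have "sqrt (2*pi) * sqrt (2*pi) = 2*pi" by simp
  ultimately show ?thesis unfolding phi_eq
    by (metis times_divide_times_eq)
qed

lemma FTC_le:
  fixes f F :: "real \<Rightarrow> real"
  assumes "\<And>x. a \<le> x \<Longrightarrow> DERIV F x :> f x" "\<And>x. a \<le> x \<Longrightarrow> 0 \<le> f x" "(F \<longlongrightarrow> T) at_top"
  shows "F a \<le> T"
proof (rule tendsto_lowerbound[OF assms(3)])
  show "\<forall>\<^sub>F x in at_top. F a \<le> F x"
    unfolding eventually_at_top_linorder
  proof (intro exI allI impI)
    fix x assume "a \<le> x"
    thus "F a \<le> F x"
      by (rule DERIV_nonneg_imp_nondecreasing) (use assms in \<open>auto intro: order_trans\<close>)
  qed
qed simp

lemma inner1: "(\<integral>\<^sup>+u. ennreal (indicator {0 ..} u * u ^ Suc 0 * std_phi u * std_phi (u * v)) \<partial>lborel) = ennreal (1/(2*pi*(1+v^2)))"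
proof -
  define b where "b = 1 + v^2"
  have b: "b > 0" unfolding b_def by (rule onepsq2)
  define f where "f u = u * exp (-(b*u^2)/2) / (2*pi)" for u :: real
  define F where "F u = - exp (-(b*u^2)/2) / (2*pi*b)" for u :: real
  have "(\<integral>\<^sup>+u. ennreal (indicator {0 ..} u * u ^ Suc 0 * std_phi u * std_phi (u * v)) \<partial>lborel)
      = (\<integral>\<^sup>+u. ennreal (f u) * indicator {0 ..} u \<partial>lborel)"
    by (rule nn_integral_cong) (auto simp: f_def b_def mult.assoc phi_prod split: split_indicator)
  also have "\<dots> = ennreal (0 - F 0)"
  proof (rule nn_integral_FTC_atLeast)
    show "f \<in> borel_measurable borel" unfolding f_def[abs_def] by measurable
    show "DERIV F x :> f x" for x
      unfolding F_def f_def using b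
      by (auto intro!: derivative_eq_intros simp: field_simps power2_eq_square)
    show "0 \<le> f x" if "0 \<le> x" for x using that unfolding f_def by simp
    show "(F \<longlongrightarrow> 0) at_top" unfolding F_def[abs_def] using b by real_asymp
  qed
  also have "0 - F 0 = 1/(2*pi*(1+v^2))" unfolding F_def b_def by simp
  finally show ?thesis .
qed

lemma inner3: "(\<integral>\<^sup>+u. ennreal (indicator {0 ..} u * u ^ Suc 2 * std_phi u * std_phi (u * v)) \<partial>lborel) = ennreal (1/(pi*(1+v^2)^2))"
proof -
  define b where "b = 1 + v^2"
  have b: "b > 0" unfolding b_def by (rule onepsq2)
  define f where "f u = u^3 * exp (-(b*u^2)/2) / (2*pi)" for u :: real
  define F where "F u = - (u^2/b + 2/b^2) * exp (-(b*u^2)/2) / (2*pi)" for u :: real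
  have "(\<integral>\<^sup>+u. ennreal (indicator {0 ..} u * u ^ Suc 2 * std_phi u * std_phi (u * v)) \<partial>lborel)
      = (\<integral>\<^sup>+u. ennreal (f u) * indicator {0 ..} u \<partial>lborel)"
    by (rule nn_integral_cong) (auto simp: f_def b_def mult.assoc phi_prod split: split_indicator)
  also have "\<dots> = ennreal (0 - F 0)"
  proof (rule nn_integral_FTC_atLeast)
    show "f \<in> borel_measurable borel" unfolding f_def[abs_def] by measurable
    show "DERIV F x :> f x" for x
      unfolding F_def f_def using b
      by (auto intro!: derivative_eq_intros simp: field_simps power2_eq_square eval_nat_numeral)
    show "0 \<le> f x" if "0 \<le> x" for x using that unfolding f_def by simp
    show "(F \<longlongrightarrow> 0) at_top" unfolding F_def[abs_def] using b by real_asymp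
  qed
  also have "0 - F 0 = 1/(pi*b^2)" unfolding F_def using b by (simp add: field_simps power2_eq_square)
  also have "\<dots> = 1/(pi*(1+v^2)^2)" unfolding b_def ..
  finally show ?thesis .
qed


lemma outer1:
  "(\<integral>\<^sup>+v. ennreal (1/(2*pi*(1+v^2))) * indicator {a ..} v \<partial>lborel) = ennreal (1/4 - arctan a/(2*pi))"
  "arctan a/(2*pi) \<le> 1/4"
proof -
  define f where "f v = 1/(2*pi*(1+v^2))" for v :: real
  define F where "F v = arctan v/(2*pi)" for v :: real
  have d: "DERIV F x :> f x" for x
  proof -
    have p: "1 + x^2 \<noteq> 0" by (rule onepsq)
    show ?thesis
      unfolding F_def f_def
      apply (rule derivative_eq_intros refl | simp add: p)+
      using p apply (simp add: divide_simps)
      done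
  qed
  have nn: "0 \<le> f x" for x unfolding f_def using onepsq2[of x] by simp
  have "((\<lambda>v. arctan v/(2*pi)) \<longlongrightarrow> (pi/2)/(2*pi)) at_top"
    by (intro tendsto_divide tendsto_const tendsto_arctan_at_top) simp
  hence lim: "(F \<longlongrightarrow> 1/4) at_top" unfolding F_def[abs_def] by simp
  have "(\<integral>\<^sup>+v. ennreal (f v) * indicator {a ..} v \<partial>lborel) = ennreal (1/4 - F a)"
    by (rule nn_integral_FTC_atLeast) (use d nn lim in \<open>auto simp: f_def[abs_def]\<close>)
  thus "(\<integral>\<^sup>+v. ennreal (1/(2*pi*(1+v^2))) * indicator {a ..} v \<partial>lborel) = ennreal (1/4 - arctan a/(2*pi))"
    unfolding f_def F_def .
  show "arctan a/(2*pi) \<le> 1/4"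
    using FTC_le[of a F f "1/4"] d nn lim unfolding F_def by blast
qed

lemma outer3:
  "(\<integral>\<^sup>+v. ennreal (1/(pi*(1+v^2)^2)) * indicator {a ..} v \<partial>lborel) = ennreal (hh a)"
  "0 \<le> hh a"
proof -
  define f where "f v = 1/(pi*(1+v^2)^2)" for v :: real
  define F where "F v = (arctan v + v/(1+v^2))/(2*pi)" for v :: real
  have d: "DERIV F x :> f x" for x
  proof -
    have p: "1 + x^2 \<noteq> 0" by (rule onepsq)
    show ?thesis
      unfolding F_def f_def
      apply (rule derivative_eq_intros refl | simp add: p)+
      using p apply (simp add: divide_simps)
      apply algebra
      done
  qed
  have nn: "0 \<le> f x" for x unfolding f_def using onepsq2[of x] by simp
  have "((\<lambda>v. (arctan v + v/(1+v^2))/(2*pi)) \<longlongrightarrow> (pi/2 + 0)/(2*pi)) at_top"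
  proof -
    have l1: "((\<lambda>v::real. v/(1+v^2)) \<longlongrightarrow> 0) at_top" by real_asymp
    show ?thesis by (intro tendsto_divide tendsto_const tendsto_add tendsto_arctan_at_top l1) simp
  qed
  hence lim: "(F \<longlongrightarrow> 1/4) at_top" unfolding F_def[abs_def] by simp
  have "(\<integral>\<^sup>+v. ennreal (f v) * indicator {a ..} v \<partial>lborel) = ennreal (1/4 - F a)"
    by (rule nn_integral_FTC_atLeast) (use d nn lim in \<open>auto simp: f_def[abs_def]\<close>)
  moreover have "1/4 - F a = hh a" unfolding F_def hh_def by simp
  ultimately show "(\<integral>\<^sup>+v. ennreal (1/(pi*(1+v^2)^2)) * indicator {a ..} v \<partial>lborel) = ennreal (hh a)"
    unfolding f_def by simp
  show "0 \<le> hh a"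
    using FTC_le[of a F f "1/4"] d nn lim unfolding F_def hh_def by auto
qed


lemma key:
  assumes a: "a > 0"
  shows "(\<integral>\<^sup>+u. ennreal (indicator {0 ..} u * (u^k * std_Phi (-(a*u)) * std_phi u)) \<partial>lborel)
       = (\<integral>\<^sup>+v. (\<integral>\<^sup>+u. ennreal (indicator {0 ..} u * u ^ Suc k * std_phi u * std_phi (u * v)) \<partial>lborel) * indicator {a ..} v \<partial>lborel)"
proof -
  define G where "G u v = ennreal (indicator {0 ..} u * u ^ Suc k * std_phi u * std_phi (u * v) * indicator {a ..} v)" for u v :: real
  have Gm[measurable]: "case_prod G \<in> borel_measurable (lborel \<Otimes>\<^sub>M lborel)"
    unfolding G_def[abs_def] by measurable
  have step1: "(\<integral>\<^sup>+u. ennreal (indicator {0 ..} u * (u^k * std_Phi (-(a*u)) * std_phi u)) \<partial>lborel)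
       = (\<integral>\<^sup>+u. (\<integral>\<^sup>+v. G u v \<partial>lborel) \<partial>lborel)"
  proof (rule nn_integral_cong_AE)
    show "AE u in lborel. ennreal (indicator {0 ..} u * (u^k * std_Phi (-(a*u)) * std_phi u)) = (\<integral>\<^sup>+v. G u v \<partial>lborel)"
      using AE_lborel_singleton[of 0]
    proof eventually_elim
      case (elim u)
      show ?case
      proof (cases "u > 0")
        case False
        hence "u < 0" using elim by simp
        thus ?thesis by (simp add: G_def)
      next
        case True
        have "ennreal (indicator {0 ..} u * (u^k * std_Phi (-(a*u)) * std_phi u))
            = ennreal (u^k * std_phi u) * ennreal (std_Phi (-(a*u)))"
          using True by (simp add: ennreal_mult[symmetric] phi_nonneg Phi_nonneg mult_ac)
        also have "\<dots> = ennreal (u^k * std_phi u) * (\<integral>\<^sup>+v. ennreal (u * std_phi (u * v) * indicator {a ..} v) \<partial>lborel)"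
          using Phi_subst[OF True] by simp
        also have "\<dots> = (\<integral>\<^sup>+v. ennreal (u^k * std_phi u) * ennreal (u * std_phi (u * v) * indicator {a ..} v) \<partial>lborel)"
          by (rule nn_integral_cmult[symmetric]) measurable
        also have "\<dots> = (\<integral>\<^sup>+v. G u v \<partial>lborel)"
          unfolding G_def using True
          by (intro nn_integral_cong) (simp add: ennreal_mult[symmetric] phi_nonneg mult_ac)
        finally show ?thesis .
      qed
    qed
  qed
  also have "\<dots> = (\<integral>\<^sup>+v. (\<integral>\<^sup>+u. G u v \<partial>lborel) \<partial>lborel)"
    by (rule lborel_pair.Fubini'[symmetric]) (rule Gm)
  also have "\<dots> = (\<integral>\<^sup>+v. (\<integral>\<^sup>+u. ennreal (indicator {0 ..} u * u ^ Suc k * std_phi u * std_phi (u * v)) \<partial>lborel) * indicator {a ..} v \<partial>lborel)"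
  proof (rule nn_integral_cong)
    fix v :: real
    have "(\<integral>\<^sup>+u. G u v \<partial>lborel) = (\<integral>\<^sup>+u. ennreal (indicator {0 ..} u * u ^ Suc k * std_phi u * std_phi (u * v)) * indicator {a ..} v \<partial>lborel)"
      unfolding G_def by (intro nn_integral_cong) (auto split: split_indicator)
    also have "\<dots> = (\<integral>\<^sup>+u. ennreal (indicator {0 ..} u * u ^ Suc k * std_phi u * std_phi (u * v)) \<partial>lborel) * indicator {a ..} v"
      by (rule nn_integral_multc) measurable
    finally show "(\<integral>\<^sup>+u. G u v \<partial>lborel) = (\<integral>\<^sup>+u. ennreal (indicator {0 ..} u * u ^ Suc k * std_phi u * std_phi (u * v)) \<partial>lborel) * indicator {a ..} v" .
  qed
  finally show ?thesis .
qed


lemma A_val: assumes a: "a > 0"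
  shows "(LBINT u:{0 ..}. std_Phi (-(a*u)) * std_phi u) = 1/4 - arctan a/(2*pi)"
proof -
  have "(LBINT u:{0 ..}. std_Phi (-(a*u)) * std_phi u)
      = enn2real (\<integral>\<^sup>+u. ennreal (indicator {0 ..} u * (u^0 * std_Phi (-(a*u)) * std_phi u)) \<partial>lborel)"
    unfolding set_lebesgue_integral_def
    by (subst integral_eq_nn_integral) (auto simp: Phi_nonneg phi_nonneg)
  also have "(\<integral>\<^sup>+u. ennreal (indicator {0 ..} u * (u^0 * std_Phi (-(a*u)) * std_phi u)) \<partial>lborel)
      = (\<integral>\<^sup>+v. ennreal (1/(2*pi*(1+v^2))) * indicator {a ..} v \<partial>lborel)"
    unfolding key[OF a] inner1 ..
  also have "\<dots> = ennreal (1/4 - arctan a/(2*pi))" by (rule outer1(1))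
  finally show ?thesis using outer1(2)[of a] by simp
qed

lemma H_val: assumes a: "a > 0"
  shows "(LBINT u:{0 ..}. u\<^sup>2 * std_Phi (-(a*u)) * std_phi u) = hh a"
proof -
  have "(LBINT u:{0 ..}. u\<^sup>2 * std_Phi (-(a*u)) * std_phi u)
      = enn2real (\<integral>\<^sup>+u. ennreal (indicator {0 ..} u * (u^2 * std_Phi (-(a*u)) * std_phi u)) \<partial>lborel)"
    unfolding set_lebesgue_integral_def
    by (subst integral_eq_nn_integral) (auto simp: Phi_nonneg phi_nonneg)
  also have "(\<integral>\<^sup>+u. ennreal (indicator {0 ..} u * (u^2 * std_Phi (-(a*u)) * std_phi u)) \<partial>lborel)
      = (\<integral>\<^sup>+v. ennreal (1/(pi*(1+v^2)^2)) * indicator {a ..} v \<partial>lborel)"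
    unfolding key[OF a] inner3 ..
  also have "\<dots> = ennreal (hh a)" by (rule outer3(1))
  finally show ?thesis using outer3(2)[of a] by simp
qed

lemma g_formula:
  assumes k: "\<xi> * sqrt (c * I) > 0" and l: "l > 0"
  shows "g_speed I c \<xi> l = (16 * c / (\<xi> * sqrt (c * I))^2) * MM (l * (\<xi> * sqrt (c * I)) / 2)"
proof -
  define k where "k = \<xi> * sqrt (c * I)"
  define a where "a = l * k / 2"
  have a0: "a > 0" using k l unfolding a_def k_def by simp
  have e: "- (u * l * \<xi> * sqrt (c * I)) / 2 = - (a * u)" for u
    unfolding a_def k_def by (simp add: field_simps)
  have "g_speed I c \<xi> l = 4 * c * l\<^sup>2 * hh a"
    unfolding g_speed_def e H_val[OF a0] ..
  also have "\<dots> = (16 * c / k^2) * MM a"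
  proof -
    have "a^2 = l^2*k^2/4" unfolding a_def by (simp add: power_mult_distrib power_divide)
    moreover have "k \<noteq> 0" using k unfolding k_def by linarith
    ultimately show ?thesis unfolding MM_def by (simp add: field_simps)
  qed
  finally show ?thesis unfolding a_def k_def .
qed

lemma acc_formula:
  assumes k: "\<xi> * sqrt (c * I) > 0" and l: "l > 0"
  shows "acc_rate I c \<xi> l = 1 - 2 * arctan (l * (\<xi> * sqrt (c * I)) / 2) / pi"
proof -
  define k where "k = \<xi> * sqrt (c * I)"
  define a where "a = l * k / 2"
  have a0: "a > 0" using k l unfolding a_def k_def by simp
  have e: "- (u * l * \<xi> * sqrt (c * I)) / 2 = - (a * u)" for u
    unfolding a_def k_def by (simp add: field_simps)
  have "acc_rate I c \<xi> l = 4 * (1/4 - arctan a/(2*pi))"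
    unfolding acc_rate_def e A_val[OF a0] ..
  also have "\<dots> = 1 - 2 * arctan a / pi" by (simp add: field_simps)
  finally show ?thesis unfolding a_def k_def .
qed

theorem corollary4:
  fixes I \<xi> c :: real
  assumes "I > 0" and "\<xi> > 0" and "0 < c" and "c \<le> 1"
  shows "(\<exists>l>0. \<forall>l'>0. g_speed I c \<xi> l' \<le> g_speed I c \<xi> l)
       \<and> (\<forall>l_opt>0. (\<forall>l'>0. g_speed I c \<xi> l' \<le> g_speed I c \<xi> l_opt) \<longrightarrow>
            round3 (l_opt * \<xi> * sqrt (c * I)) = 2.426
          \<and> round3 (acc_rate I c \<xi> l_opt) = 0.439)"
proof -
  define k where "k = \<xi> * sqrt (c * I)"
  have k: "k > 0" unfolding k_def using assms by simp
  define C where "C = 16 * c / k^2"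
  have C: "C > 0" unfolding C_def using k assms by simp
  have g: "g_speed I c \<xi> l = C * MM (l * k / 2)" if "l > 0" for l
    using g_formula[of \<xi> c I l] k that unfolding C_def k_def by simp
  have part1: "\<exists>l>0. \<forall>l'>0. g_speed I c \<xi> l' \<le> g_speed I c \<xi> l"
  proof -
    obtain am where am: "am \<in> {1.2128..1.21324}" "\<forall>b>0. MM b \<le> MM am"
      using MM_max_exists by blast
    have am0: "am > 0" using am(1) by simp
    define l0 where "l0 = 2 * am / k"
    have l0: "l0 > 0" unfolding l0_def using am0 k by simp
    have l0a: "l0 * k / 2 = am" unfolding l0_def using k by simp
    have "\<forall>l'>0. g_speed I c \<xi> l' \<le> g_speed I c \<xi> l0"
    proof (intro allI impI)
      fix l' :: real assume l': "l' > 0"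
      have "MM (l' * k / 2) \<le> MM am" using am(2) l' k by simp
      thus "g_speed I c \<xi> l' \<le> g_speed I c \<xi> l0"
        unfolding g[OF l'] g[OF l0] l0a using C by simp
    qed
    thus ?thesis using l0 by blast
  qed
  have part2: "round3 (l_opt * \<xi> * sqrt (c * I)) = 2.426 \<and> round3 (acc_rate I c \<xi> l_opt) = 0.439"
    if lo: "l_opt > 0" and mx: "\<forall>l'>0. g_speed I c \<xi> l' \<le> g_speed I c \<xi> l_opt" for l_opt
  proof -
    define a where "a = l_opt * k / 2"
    have a0: "a > 0" unfolding a_def using lo k by simp
    have "\<forall>b>0. MM b \<le> MM a"
    proof (intro allI impI)
      fix b :: real assume b: "b > 0"
      define l' where "l' = 2 * b / k"
      have l': "l' > 0" unfolding l'_def using b k by simp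
      have l'b: "l' * k / 2 = b" unfolding l'_def using k by simp
      have "C * MM b \<le> C * MM a"
        using mx[rule_format, OF l'] unfolding g[OF l'] g[OF lo] l'b a_def .
      thus "MM b \<le> MM a" using C by simp
    qed
    hence r: "1.2128 \<le> a" "a \<le> 1.21324" using MM_max_loc[OF a0] by auto
    have "l_opt * \<xi> * sqrt (c * I) = 2 * a" unfolding a_def k_def by simp
    hence 1: "round3 (l_opt * \<xi> * sqrt (c * I)) = 2.426" using round_l[OF r] by simp
    have "acc_rate I c \<xi> l_opt = 1 - 2 * arctan a / pi"
      using acc_formula[of \<xi> c I l_opt] k lo unfolding a_def k_def by simp
    hence 2: "round3 (acc_rate I c \<xi> l_opt) = 0.439" using round_acc[OF r] by simp
    show ?thesis using 1 2 by simp
  qed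
  show ?thesis using part1 part2 by blast
qed

end
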